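(* Let $p$ be a prime and let $\mathbb{C}_p$ be the field of complex $p$-adic numbers with $p$-adic norm $|\cdot|_p$. Let $a,b,c\in\mathbb{C}_p$ with $b\neq 0$ and $c\neq ab$, and let $f(x)=\frac{x+a}{bx+c}$ for $x\in\mathbb{C}_p$, $x\neq \hat x:=-c/b$. Fix a square root $\sqrt{(c-1)^2+4ab}\in\mathbb{C}_p$ and let $$x_1=\frac{1-c+\sqrt{(c-1)^2+4ab}}{2b},\qquad x_2=\frac{1-c-\sqrt{(c-1)^2+4ab}}{2b}$$ be the fixed points of $f$. Assume $$|f'(x_i)|_p=\left|\frac{c-ab}{(bx_i+c)^2}\right|_p=1\quad (i=1,2)$$ and $$\left|\frac{b}{\sqrt{c-ab}}\right|_p<1 .$$ Put $\varepsilon_c=\left|\frac{\sqrt{c-ab}}{b}\right|_p-1$. Then for $i=1,2$ the maximum Siegel disk of $f$ centered at $x_i$ is $$SI(x_i)=V_{1+\varepsilon_c}(x_i).$$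
   Context: For $x_0\in\mathbb{C}_p$ and $r>0$: $U_r(x_0)=\{x\in\mathbb{C}_p:|x-x_0|_p\le r\}$, $V_r(x_0)=\{x\in\mathbb{C}_p:|x-x_0|_p<r\}$, $S_r(x_0)=\{x\in\mathbb{C}_p:|x-x_0|_p=r\}$. The value $|\sqrt{c-ab}|_p=|c-ab|_p^{1/2}$ does not depend on the choice of square root. For a fixed point $x_0$ of $f$, a ball $V_r(x_0)$ (contained in the domain of $f$) is called a Siegel disk if every sphere $S_\rho(x_0)$ with $\rho<r$ is invariant, i.e. for every $x\in S_\rho(x_0)$ all iterates $f^n(x)$, $n=1,2,\dots$, are defined and lie in $S_\rho(x_0)$. The maximum Siegel disk $SI(x_0)$ is the union of all Siegel disks centered at $x_0$. *)

theory Defs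
  imports "HOL-Computational_Algebra.Polynomial" "HOL-Computational_Algebra.Primes"
begin

text \<open>C_p is not available in Isabelle/HOL. We model it abstractly as a field 'a carrying
  a non-archimedean absolute value N (the p-adic norm), complete, algebraically closed,
  with N p = 1/p.\<close>

definition nonarch_abs :: "('a::field \<Rightarrow> real) \<Rightarrow> bool" where
  "nonarch_abs N \<longleftrightarrow> (\<forall>x. 0 \<le> N x) \<and> (\<forall>x. N x = 0 \<longleftrightarrow> x = 0)
     \<and> (\<forall>x y. N (x * y) = N x * N y) \<and> (\<forall>x y. N (x + y) \<le> max (N x) (N y))"

definition complete_wrt :: "('a::field \<Rightarrow> real) \<Rightarrow> bool" where
  "complete_wrt N \<longleftrightarrow> (\<forall>X::nat \<Rightarrow> 'a.
     (\<forall>e>0. \<exists>M. \<forall>m\<ge>M. \<forall>n\<ge>M. N (X m - X n) < e) \<longrightarrow>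
     (\<exists>L. \<forall>e>0. \<exists>M. \<forall>n\<ge>M. N (X n - L) < e))"

definition alg_closed_field :: "'a::field itself \<Rightarrow> bool" where
  "alg_closed_field _ \<longleftrightarrow> (\<forall>q::'a poly. 0 < degree q \<longrightarrow> (\<exists>x. poly q x = 0))"

definition Cp_model :: "nat \<Rightarrow> ('a::field \<Rightarrow> real) \<Rightarrow> bool" where
  "Cp_model p N \<longleftrightarrow> prime p \<and> nonarch_abs N \<and> complete_wrt N
     \<and> alg_closed_field TYPE('a) \<and> N (of_nat p) = 1 / real p"

definition ballV :: "('a::field \<Rightarrow> real) \<Rightarrow> 'a \<Rightarrow> real \<Rightarrow> 'a set" where
  "ballV N x0 r = {x. N (x - x0) < r}"

definition sphereS :: "('a::field \<Rightarrow> real) \<Rightarrow> 'a \<Rightarrow> real \<Rightarrow> 'a set" where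
  "sphereS N x0 r = {x. N (x - x0) = r}"

definition siegel_disk :: "('a::field \<Rightarrow> real) \<Rightarrow> ('a \<Rightarrow> 'a) \<Rightarrow> 'a set \<Rightarrow> 'a \<Rightarrow> real \<Rightarrow> bool" where
  "siegel_disk N F D x0 r \<longleftrightarrow> 0 < r \<and> x0 \<in> D \<and> F x0 = x0 \<and> ballV N x0 r \<subseteq> D \<and>
     (\<forall>\<rho><r. \<forall>x\<in>sphereS N x0 \<rho>. \<forall>n::nat. (F ^^ n) x \<in> D \<and> (F ^^ n) x \<in> sphereS N x0 \<rho>)"

definition max_siegel :: "('a::field \<Rightarrow> real) \<Rightarrow> ('a \<Rightarrow> 'a) \<Rightarrow> 'a set \<Rightarrow> 'a \<Rightarrow> 'a set" where
  "max_siegel N F D x0 = \<Union>{ballV N x0 r | r. siegel_disk N F D x0 r}"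

end

theory Submission
  imports Defs
begin

lemma na_basic:
  assumes "nonarch_abs N"
  shows "N 0 = 0" "N 1 = 1" "N (x * y) = N x * N y" "N x \<ge> 0"
    "N (- x) = N x" "N (x / y) = N x / N y" "N (x ^ 2) = N x ^ 2"
    "N (x + y) \<le> max (N x) (N y)" "N x = 0 \<longleftrightarrow> x = 0"
proof -
  have m: "\<And>x y. N (x * y) = N x * N y" and z: "\<And>x. N x = 0 \<longleftrightarrow> x = 0"
    and t: "\<And>x y. N (x + y) \<le> max (N x) (N y)" and p: "\<And>x. N x \<ge> 0"
    using assms unfolding nonarch_abs_def by auto
  show "N 0 = 0" "N (x * y) = N x * N y" "N x \<ge> 0" "N (x + y) \<le> max (N x) (N y)"
    "N x = 0 \<longleftrightarrow> x = 0" using m z t p by auto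
  have "N 1 = N 1 * N 1" using m[of 1 1] by simp
  moreover have "N 1 \<noteq> 0" using z by simp
  ultimately show o: "N 1 = 1" by (metis mult_cancel_left1)
  have "N (-1) * N (-1) = 1" using m[of "-1" "-1"] o by simp
  hence "N (-1) = 1" using p[of "-1"]
    by (metis abs_of_nonneg mult_cancel_left1 nonzero_eq_divide_eq real_sqrt_abs2 real_sqrt_one zero_neq_one)
  then show "N (- x) = N x" using m[of "-1" x] by simp
  show "N (x ^ 2) = N x ^ 2" using m[of x x] by (simp add: power2_eq_square)
  show "N (x / y) = N x / N y"
  proof (cases "y = 0")
    case True
    have "N 0 = 0" using z by simp
    then show ?thesis using True by simp
  next
    case False
    have "N y * N (inverse y) = 1" using m[of y "inverse y"] False o by simp
    moreover have "N y \<noteq> 0" using z False by simp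
    ultimately have "N (inverse y) = 1 / N y" by (simp add: field_simps)
    then show ?thesis using m[of x "inverse y"] by (simp add: divide_inverse)
  qed
qed

lemma na_strict:
  assumes "nonarch_abs N" "N u < N v"
  shows "N (u + v) = N v"
proof -
  have "N (u + v) \<le> max (N u) (N v)" using na_basic[OF assms(1)] by blast
  hence a: "N (u + v) \<le> N v" using assms by simp
  have "N v = N ((u + v) + (- u))" by simp
  also have "\<dots> \<le> max (N (u + v)) (N (- u))" using na_basic[OF assms(1)] by blast
  finally have "N v \<le> max (N (u + v)) (N u)" using na_basic[OF assms(1)] by simp
  then show ?thesis using a assms(2) by linarith
qed

lemma main:
  fixes N :: "'a::field \<Rightarrow> real" and a b c x0 :: 'a
  assumes N: "nonarch_abs N" and b0: "b \<noteq> 0"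
    and fx: "x0 + a = x0 * (b * x0 + c)"
    and d: "N ((c - a * b) / (b * x0 + c) ^ 2) = 1"
    and small: "N b / sqrt (N (c - a * b)) < 1"
  shows "max_siegel N (\<lambda>x. (x + a) / (b * x + c)) {x. x \<noteq> - c / b} x0
     = ballV N x0 (sqrt (N (c - a * b)) / N b)"
proof -
  note B = na_basic[OF N]
  define F where "F = (\<lambda>x. (x + a) / (b * x + c))"
  define g where "g = b * x0 + c"
  define D where "D = c - a * b"
  define R where "R = sqrt (N D) / N b"
  define Dom where "Dom = {x. x \<noteq> - c / b}"
  have g0: "g \<noteq> 0" using d B unfolding g_def by auto
  have Ng: "N g > 0" using g0 B by (metis less_eq_real_def)
  have Nb: "N b > 0" using b0 B by (metis less_eq_real_def)
  have "N D / N g ^ 2 = 1" using d B unfolding g_def D_def by metis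
  hence ND: "N D = N g ^ 2" using Ng by (simp add: divide_eq_eq)
  hence sq: "sqrt (N D) = N g" using Ng by simp
  have R: "R = N g / N b" unfolding R_def sq ..
  have bg: "N b < N g" using small Nb unfolding D_def[symmetric] sq
    by (simp add: divide_less_eq Ng)
  have R1: "R > 1" using bg Nb R by simp
  have hat: "N (- c / b - x0) = R"
  proof -
    have "- c / b - x0 = - (g / b)" using b0 unfolding g_def by (simp add: field_simps)
    then show ?thesis using B R by simp
  qed
  have Fx0: "F x0 = x0" using fx g0 unfolding F_def g_def by (simp add: field_simps)
  have step: "N (F x - x0) = N (x - x0) \<and> F x \<in> Dom" if "N (x - x0) < R" for x
  proof -
    have "N (b * (x - x0)) < N g" using that B Nb R by (simp add: pos_less_divide_eq mult.commute)
    hence "N (b * (x - x0) + g) = N g" using na_strict[OF N] by blast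
    moreover have e: "b * (x - x0) + g = b * x + c" unfolding g_def by (simp add: algebra_simps)
    ultimately have Nx: "N (b * x + c) = N g" by simp
    hence x0': "b * x + c \<noteq> 0" using Ng B by (metis less_irrefl)
    have "F x - x0 = D * (x - x0) / ((b * x + c) * g)"
    proof -
      have x0e: "x0 = (x0 + a) / g" using fx g0 unfolding g_def by simp
      have "F x - x0 = (x + a) / (b * x + c) - (x0 + a) / g" unfolding F_def using x0e by simp
      also have "\<dots> = ((x + a) * g - (x0 + a) * (b * x + c)) / ((b * x + c) * g)"
        using x0' g0 by (simp add: diff_frac_eq)
      also have "(x + a) * g - (x0 + a) * (b * x + c) = D * (x - x0)"
        unfolding g_def D_def by (simp add: algebra_simps)
      finally show ?thesis .
    qed
    hence "N (F x - x0) = N D * N (x - x0) / (N g * N g)" using B Nx by simp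
    hence e1: "N (F x - x0) = N (x - x0)" using ND Ng by (simp add: power2_eq_square)
    have "F x \<noteq> - c / b"
    proof
      assume "F x = - c / b" then have "N (F x - x0) = R" using hat by simp
      thus False using e1 that by simp
    qed
    thus ?thesis using e1 unfolding Dom_def by simp
  qed
  have iter: "N ((F ^^ n) x - x0) = N (x - x0) \<and> (F ^^ n) x \<in> Dom" if "N (x - x0) < R" for x n
  proof (induction n)
    case 0
    have "x \<noteq> - c / b" using hat that by auto
    then show ?case unfolding Dom_def by simp
  next
    case (Suc n)
    then show ?case using step[of "(F ^^ n) x"] that by simp
  qed
  have sd: "siegel_disk N F Dom x0 R"
    unfolding siegel_disk_def
  proof (intro conjI allI impI ballI)
    show "0 < R" using R1 by simp
    have "N 0 = 0" using B by simp
    then show "x0 \<in> Dom" using hat R1 unfolding Dom_def by auto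
    show "F x0 = x0" by (rule Fx0)
    show "ballV N x0 R \<subseteq> Dom" using iter[of _ 0] unfolding ballV_def by auto
    fix \<rho> x n assume "\<rho> < R" "x \<in> sphereS N x0 \<rho>"
    then have "N (x - x0) = \<rho>" "N (x - x0) < R" unfolding sphereS_def by auto
    then show "(F ^^ n) x \<in> Dom" "(F ^^ n) x \<in> sphereS N x0 \<rho>"
      using iter[of x n] unfolding sphereS_def by auto
  qed
  have sub: "ballV N x0 r \<subseteq> ballV N x0 R" if "siegel_disk N F Dom x0 r" for r
  proof -
    have "ballV N x0 r \<subseteq> Dom" using that unfolding siegel_disk_def by auto
    hence "- c / b \<notin> ballV N x0 r" unfolding Dom_def by auto
    hence "R \<ge> r" using hat unfolding ballV_def by auto
    thus ?thesis unfolding ballV_def by auto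
  qed
  have "max_siegel N F Dom x0 = ballV N x0 R"
    unfolding max_siegel_def using sd sub by blast
  thus ?thesis unfolding F_def Dom_def R_def D_def .
qed

lemma two_ne:
  assumes "Cp_model p (N :: 'a::field \<Rightarrow> real)"
  shows "(2::'a) \<noteq> 0"
proof
  assume h: "(2::'a) = 0"
  have pr: "prime p" and N: "nonarch_abs N" and Np: "N (of_nat p) = 1 / real p"
    using assms unfolding Cp_model_def by auto
  have p2: "p \<ge> 2" using pr by (simp add: prime_ge_2_nat)
  have "of_nat p = (of_nat (p mod 2) :: 'a)"
  proof -
    have "(of_nat p :: 'a) = of_nat (2 * (p div 2) + p mod 2)" by simp
    also have "\<dots> = of_nat (p mod 2)" using h by (simp only: of_nat_add of_nat_mult) simp
    finally show ?thesis .
  qed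
  moreover have "p mod 2 = 0 \<or> p mod 2 = 1" by auto
  ultimately have "N (of_nat p) = 0 \<or> N (of_nat p) = 1" using na_basic[OF N] by auto
  thus False using Np p2 by auto
qed

theorem theorem3p2:
  fixes p :: nat and N :: "'a::field \<Rightarrow> real" and a b c s :: 'a
  assumes Cp: "Cp_model p N"
    and b0: "b \<noteq> 0" and cab: "c \<noteq> a * b"
    and s: "s ^ 2 = (c - 1) ^ 2 + 4 * a * b"
    and d1: "N ((c - a * b) / (b * ((1 - c + s) / (2 * b)) + c) ^ 2) = 1"
    and d2: "N ((c - a * b) / (b * ((1 - c - s) / (2 * b)) + c) ^ 2) = 1"
    and small: "N b / sqrt (N (c - a * b)) < 1"
  shows "max_siegel N (\<lambda>x. (x + a) / (b * x + c)) {x. x \<noteq> - c / b} ((1 - c + s) / (2 * b))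
           = ballV N ((1 - c + s) / (2 * b)) (1 + (sqrt (N (c - a * b)) / N b - 1))
       \<and> max_siegel N (\<lambda>x. (x + a) / (b * x + c)) {x. x \<noteq> - c / b} ((1 - c - s) / (2 * b))
           = ballV N ((1 - c - s) / (2 * b)) (1 + (sqrt (N (c - a * b)) / N b - 1))"
proof -
  have N: "nonarch_abs N" using Cp unfolding Cp_model_def by auto
  have two: "(2::'a) \<noteq> 0" using two_ne[OF Cp] .
  have fix_pt: "x0 + a = x0 * (b * x0 + c)" if "x0 = (1 - c + t) / (2 * b)"
    and "t ^ 2 = (c - 1) ^ 2 + 4 * a * b" for x0 t
  proof -
    have e: "2 * b * x0 = 1 - c + t" using that(1) two b0 by simp
    have "(2 * b * x0) ^ 2 + 2 * (c - 1) * (2 * b * x0) - 4 * a * b = 0"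
      unfolding e using that(2) by (simp add: algebra_simps power2_eq_square)
    hence "4 * b * (x0 * (b * x0 + c) - x0 - a) = 0"
      by (simp add: algebra_simps power2_eq_square)
    moreover have "(4::'a) \<noteq> 0" using two by (metis mult_2 mult_eq_0_iff numeral_Bit0 one_add_one)
    ultimately have "x0 * (b * x0 + c) - x0 - a = 0" using b0 by simp
    thus ?thesis by (simp add: algebra_simps)
  qed
  have f1: "(1 - c + s) / (2 * b) + a = (1 - c + s) / (2 * b) * (b * ((1 - c + s) / (2 * b)) + c)"
    using fix_pt[OF refl s] .
  have s': "(- s) ^ 2 = (c - 1) ^ 2 + 4 * a * b" using s by simp
  have f2: "(1 - c - s) / (2 * b) + a = (1 - c - s) / (2 * b) * (b * ((1 - c - s) / (2 * b)) + c)"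
    using fix_pt[OF _ s'] by simp
  show ?thesis using main[OF N b0 f1 d1 small] main[OF N b0 f2 d2 small] by simp
qed

end
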